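(* Let $\mathbf{A}\in\mathbb{R}^{n\times n}$ and $\mathbf{V}\in\mathbb{R}^{n\times r}$ with $r\le n$, and let $\mathbf{Q}_\perp\in\mathbb{R}^{n\times(n-r)}$ be the last $n-r$ columns of the orthogonal factor $\mathbf{Q}_{\rm full}$ of a full QR factorization $\mathbf{V}=\mathbf{Q}_{\rm full}\begin{bmatrix}\mathbf{R}\\\mathbf{0}\end{bmatrix}$. Then for every $k\ge r$ the polynomial $a(t)=e_k(\mathbf{A}+t\mathbf{V}\mathbf{V}^\top)$ has degree at most $r$, and its coefficient of $t^r$ equals \[\det(\mathbf{V}^\top\mathbf{V})\,e_{k-r}(\mathbf{Q}_\perp^\top\mathbf{A}\mathbf{Q}_\perp).\] In particular, for $k=n$, the coefficient of $t^r$ in $\det(\mathbf{A}+t\mathbf{V}\mathbf{V}^\top)$ equals $\det(\mathbf{V}^\top\mathbf{V})\det(\mathbf{Q}_\perp^\top\mathbf{A}\mathbf{Q}_\perp)=(-1)^r\det\begin{bmatrix}\mathbf{A}&\mathbf{V}\\\mathbf{V}^\top&0\end{bmatrix}$.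
   Context: For a square matrix $\mathbf{B}$ with eigenvalues $\lambda_1,\ldots,\lambda_m$, $e_k(\mathbf{B})=e_k(\lambda_1,\ldots,\lambda_m)$, where $e_k(\lambda_1,\ldots,\lambda_m)=\sum_{\#\mathcal{Y}=k}\prod_{i\in\mathcal{Y}}\lambda_i$ is the $k$-th elementary symmetric polynomial, with $e_0=1$; equivalently $e_k(\mathbf{B})$ is the sum of all $k\times k$ principal minors of $\mathbf{B}$. *)

theory Defs
  imports "Jordan_Normal_Form.Determinant" "Jordan_Normal_Form.DL_Submatrix"
    "HOL-Computational_Algebra.Polynomial"
begin

text \<open>k-th elementary symmetric function of the eigenvalues of a square matrix,
  written as the sum of all k x k principal minors.\<close>
definition esym_mat :: "nat \<Rightarrow> 'a::comm_ring_1 mat \<Rightarrow> 'a" where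
  "esym_mat k B = (\<Sum>Y\<in>{Y. Y \<subseteq> {0..<dim_row B} \<and> card Y = k}. det (submatrix B Y Y))"

definition pencil_mat :: "real mat \<Rightarrow> real mat \<Rightarrow> real poly mat" where
  "pencil_mat A V = map_mat (\<lambda>x. [:x:]) A + [:0, 1:] \<cdot>\<^sub>m map_mat (\<lambda>x. [:x:]) (V * V\<^sup>T)"

end

theory Submission
  imports Defs
begin

lemma signof_sq: "(signof p :: 'a::comm_ring_1) * signof p = 1"
  by (simp add: sign_def)

lemma det_reindex:
  fixes A :: "'a::comm_ring_1 mat"
  assumes A: "A \<in> carrier_mat n n" and f: "f permutes {0..<n}"
  shows "det (mat n n (\<lambda>(i,j). A $$ (f i, f j))) = det A"
proof -
  define A1 where "A1 = mat n n (\<lambda>(i,j). A $$ (i, f j))"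
  have A1: "A1 \<in> carrier_mat n n" unfolding A1_def by simp
  have fi: "\<And>i. i < n \<Longrightarrow> f i < n" using f by (simp add: permutes_in_image)
  have "mat n n (\<lambda>(i,j). A $$ (f i, f j)) = mat n n (\<lambda>(i,j). A1 $$ (f i, j))"
    by (rule eq_matI, auto simp: A1_def fi)
  hence "det (mat n n (\<lambda>(i,j). A $$ (f i, f j))) = signof f * det A1"
    using det_permute_rows[OF A1 f] by simp
  moreover have "det A1 = signof f * det A"
  proof -
    have "A1\<^sup>T = mat n n (\<lambda>(i,j). A\<^sup>T $$ (f i, j))"
      by (rule eq_matI, insert A, auto simp: A1_def fi)
    hence "det A1\<^sup>T = signof f * det A\<^sup>T"
      using det_permute_rows[of "A\<^sup>T" n f] A f by simp
    thus ?thesis using det_transpose A A1 by metis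
  qed
  ultimately show ?thesis by (simp add: signof_sq mult.assoc[symmetric])
qed

definition restr :: "'a::comm_ring_1 mat \<Rightarrow> nat set \<Rightarrow> 'a mat" where
  "restr M S = mat (dim_row M) (dim_row M) (\<lambda>(i,j). if i \<in> S \<and> j \<in> S then M $$ (i,j)
      else if i = j then 1 else 0)"

lemma restr_carrier[simp]: "M \<in> carrier_mat n n \<Longrightarrow> restr M S \<in> carrier_mat n n"
  by (auto simp: restr_def)

lemma restr_index: "M \<in> carrier_mat n n \<Longrightarrow> i < n \<Longrightarrow> j < n \<Longrightarrow>
  restr M S $$ (i,j) = (if i \<in> S \<and> j \<in> S then M $$ (i,j) else if i = j then 1 else 0)"
  by (auto simp: restr_def)

lemma pick_inj_aux:
  assumes "i < card S" "j < card S" "pick S i = pick S j" shows "i = j"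
proof (rule ccontr)
  assume "i \<noteq> j"
  then consider "i < j" | "j < i" by linarith
  thus False
  proof cases
    case 1 then show ?thesis using pick_mono[of j S i] assms by auto
  next
    case 2 then show ?thesis using pick_mono[of i S j] assms by auto
  qed
qed

lemma det_submatrix_restr:
  fixes M :: "'a::idom mat"
  assumes M: "M \<in> carrier_mat n n" and S: "S \<subseteq> {0..<n}"
  shows "det (submatrix M S S) = det (restr M S)"
proof -
  define m where "m = card S"
  define C where "C = {0..<n} - S"
  have finS: "finite S" using S finite_subset by blast
  have mn: "m \<le> n" unfolding m_def using card_mono[OF _ S] by simp
  have cardC: "card C = n - m" unfolding C_def m_def using S finS
    by (simp add: card_Diff_subset)
  define f where "f i = (if i < m then pick S i else if i < n then pick C (i - m) else i)" for i
  have fS: "i < m \<Longrightarrow> f i \<in> S" for i unfolding f_def m_def using pick_in_set by auto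
  have fC: "m \<le> i \<Longrightarrow> i < n \<Longrightarrow> f i \<in> C" for i
  proof -
    assume a: "m \<le> i" "i < n"
    hence "i - m < card C" using cardC by arith
    thus ?thesis using pick_in_set[of "i - m" C] a unfolding f_def by auto
  qed
  have fn: "i < n \<Longrightarrow> f i < n" for i using fS fC S C_def
    by (metis Diff_iff atLeastLessThan_iff not_le subsetD)
  have inj: "inj_on f {0..<n}"
  proof (rule inj_onI)
    fix i j assume i: "i \<in> {0..<n}" and j: "j \<in> {0..<n}" and eq: "f i = f j"
    show "i = j"
    proof (cases "i < m")
      case True
      show ?thesis
      proof (cases "j < m")
        case True
        then show ?thesis using \<open>i < m\<close> eq pick_inj_aux[of i S j] unfolding f_def m_def by auto
      next
        case False
        then show ?thesis using fS[OF \<open>i < m\<close>] fC[of j] j eq C_def by auto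
      qed
    next
      case False
      show ?thesis
      proof (cases "j < m")
        case True
        then show ?thesis using fS[OF \<open>j < m\<close>] fC[of i] i eq C_def False by auto
      next
        case False
        then have "i - m = j - m" using \<open>\<not> i < m\<close> eq pick_inj_aux[of "i - m" C "j - m"] i j cardC
          unfolding f_def by auto
        then show ?thesis using False \<open>\<not> i < m\<close> by auto
      qed
    qed
  qed
  have img: "f ` {0..<n} = {0..<n}"
    by (rule endo_inj_surj[OF _ _ inj], auto simp: fn)
  have perm: "f permutes {0..<n}"
  proof (rule bij_imp_permutes)
    show "bij_betw f {0..<n} {0..<n}" using inj img by (simp add: bij_betw_def)
    show "x \<notin> {0..<n} \<Longrightarrow> f x = x" for x using mn by (auto simp: f_def)
  qed
  have card_eq: "card {i. i < n \<and> i \<in> S} = m" unfolding m_def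
    using S by (metis (no_types, lifting) Collect_cong atLeastLessThan_iff mem_Collect_eq subsetD Collect_mem_eq)
  have sub: "submatrix M S S \<in> carrier_mat m m"
  proof -
    have "dim_row M = n" "dim_col M = n" using M by auto
    moreover have "dim_row (submatrix M S S) = card {i. i < dim_row M \<and> i \<in> S}" by (rule dim_submatrix(1))
    moreover have "dim_col (submatrix M S S) = card {i. i < dim_col M \<and> i \<in> S}" by (rule dim_submatrix(2))
    ultimately show ?thesis unfolding carrier_mat_def using card_eq by simp
  qed
  have eq: "mat n n (\<lambda>(i,j). restr M S $$ (f i, f j)) =
      four_block_mat (submatrix M S S) (0\<^sub>m m (n - m)) (0\<^sub>m (n - m) m) (1\<^sub>m (n - m))"
  proof (rule eq_matI)
    show "dim_row (mat n n (\<lambda>(i,j). restr M S $$ (f i, f j))) = dim_row (four_block_mat (submatrix M S S) (0\<^sub>m m (n - m)) (0\<^sub>m (n - m) m) (1\<^sub>m (n - m)))"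
      using sub mn by simp
    show "dim_col (mat n n (\<lambda>(i,j). restr M S $$ (f i, f j))) = dim_col (four_block_mat (submatrix M S S) (0\<^sub>m m (n - m)) (0\<^sub>m (n - m) m) (1\<^sub>m (n - m)))"
      using sub mn by simp
    fix i j assume "i < dim_row (four_block_mat (submatrix M S S) (0\<^sub>m m (n - m)) (0\<^sub>m (n - m) m) (1\<^sub>m (n - m)))"
      "j < dim_col (four_block_mat (submatrix M S S) (0\<^sub>m m (n - m)) (0\<^sub>m (n - m) m) (1\<^sub>m (n - m)))"
    hence i: "i < n" and j: "j < n" using sub mn by auto
    have r: "restr M S $$ (f i, f j) = (if f i \<in> S \<and> f j \<in> S then M $$ (f i, f j) else if f i = f j then 1 else 0)"
      using restr_index[OF M fn[OF i] fn[OF j]] .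
    show "mat n n (\<lambda>(i,j). restr M S $$ (f i, f j)) $$ (i, j) = four_block_mat (submatrix M S S) (0\<^sub>m m (n - m)) (0\<^sub>m (n - m) m) (1\<^sub>m (n - m)) $$ (i, j)"
    proof -
      have lhs: "mat n n (\<lambda>(i,j). restr M S $$ (f i, f j)) $$ (i, j) = restr M S $$ (f i, f j)" using i j by simp
      have rhs: "four_block_mat (submatrix M S S) (0\<^sub>m m (n - m)) (0\<^sub>m (n - m) m) (1\<^sub>m (n - m)) $$ (i, j)
        = (if i < m then if j < m then submatrix M S S $$ (i,j) else 0
           else if j < m then 0 else (if i = j then 1 else 0))"
        using i j sub mn by auto
      have X: "restr M S $$ (f i, f j) = (if i < m then if j < m then submatrix M S S $$ (i,j) else 0
           else if j < m then 0 else (if i = j then 1 else 0))"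
      proof (cases "i < m"; cases "j < m")
        assume "i < m" "j < m"
        thus ?thesis using r fS submatrix_index[of i M S j S] card_eq M by (auto simp: f_def)
      next
        assume "i < m" "\<not> j < m"
        thus ?thesis using r fS[of i] fC[of j] j C_def by auto
      next
        assume "\<not> i < m" "j < m"
        thus ?thesis using r fS[of j] fC[of i] i C_def by auto
      next
        assume "\<not> i < m" "\<not> j < m"
        thus ?thesis using r fC[of i] fC[of j] i j C_def inj by (auto simp: inj_on_def)
      qed
      show ?thesis unfolding lhs rhs X by simp
    qed
  qed
  have "det (restr M S) = det (mat n n (\<lambda>(i,j). restr M S $$ (f i, f j)))"
    using det_reindex[OF restr_carrier[OF M] perm] by simp
  also have "\<dots> = det (submatrix M S S) * det (1\<^sub>m (n - m) :: 'a mat)"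
    unfolding eq by (rule det_four_block_mat_upper_right_zero[OF sub], auto)
  finally show ?thesis by simp
qed

lemma det_diag_add:
  fixes M :: "'a::comm_ring_1 mat" and x :: 'a
  assumes M: "M \<in> carrier_mat n n"
  shows "det (x \<cdot>\<^sub>m 1\<^sub>m n + M) = (\<Sum>S\<in>Pow {0..<n}. x ^ (n - card S) * det (restr M S))"
proof -
  let ?I = "{0..<n}"
  let ?P = "{p. p permutes ?I}"
  define D where "D i j = (if i = j then x else 0)" for i j :: nat
  have car: "x \<cdot>\<^sub>m 1\<^sub>m n + M \<in> carrier_mat n n" using M by simp
  have ent: "p permutes ?I \<Longrightarrow> i \<in> ?I \<Longrightarrow> (x \<cdot>\<^sub>m 1\<^sub>m n + M) $$ (i, p i) = M $$ (i, p i) + D i (p i)" for p i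
    using M by (auto simp: D_def permutes_in_image)
  have "det (x \<cdot>\<^sub>m 1\<^sub>m n + M) = (\<Sum>p\<in>?P. signof p * (\<Prod>i\<in>?I. M $$ (i, p i) + D i (p i)))"
    unfolding det_def'[OF car] by (rule sum.cong, simp, rule arg_cong[where f = "\<lambda>y. _ * y"], rule prod.cong, auto simp: ent)
  also have "\<dots> = (\<Sum>p\<in>?P. \<Sum>S\<in>Pow ?I. signof p * ((\<Prod>i\<in>S. M $$ (i, p i)) * (\<Prod>i\<in>?I - S. D i (p i))))"
    by (rule sum.cong, simp, subst prod_add, simp, simp add: sum_distrib_left)
  also have "\<dots> = (\<Sum>S\<in>Pow ?I. \<Sum>p\<in>?P. signof p * ((\<Prod>i\<in>S. M $$ (i, p i)) * (\<Prod>i\<in>?I - S. D i (p i))))"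
    by (rule sum.swap)
  also have "\<dots> = (\<Sum>S\<in>Pow ?I. x ^ (n - card S) * det (restr M S))"
  proof (rule sum.cong, simp)
    fix S assume S: "S \<in> Pow ?I"
    have RM: "restr M S \<in> carrier_mat n n" using M by simp
    have "det (restr M S) = (\<Sum>p\<in>?P. signof p * (\<Prod>i\<in>?I. restr M S $$ (i, p i)))"
      by (rule det_def'[OF RM])
    hence "x ^ (n - card S) * det (restr M S) = (\<Sum>p\<in>?P. signof p * (x ^ (n - card S) * (\<Prod>i\<in>?I. restr M S $$ (i, p i))))"
      by (simp add: sum_distrib_left ac_simps)
    also have "\<dots> = (\<Sum>p\<in>?P. signof p * ((\<Prod>i\<in>S. M $$ (i, p i)) * (\<Prod>i\<in>?I - S. D i (p i))))"
    proof (rule sum.cong, simp)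
      fix p assume "p \<in> ?P"
      hence p: "p permutes ?I" by simp
      have pI: "i \<in> ?I \<Longrightarrow> p i \<in> ?I" for i using p by (simp add: permutes_in_image)
      have R: "i \<in> ?I \<Longrightarrow> restr M S $$ (i, p i) = (if i \<in> S \<and> p i \<in> S then M $$ (i, p i) else if i = p i then 1 else 0)" for i
        using restr_index[OF M, of i "p i" S] pI by auto
      have finS: "finite S" using S finite_subset by auto
      have cardd: "card (?I - S) = n - card S" using S by (simp add: card_Diff_subset finS)
      have key: "x ^ (n - card S) * (\<Prod>i\<in>?I. restr M S $$ (i, p i)) = (\<Prod>i\<in>S. M $$ (i, p i)) * (\<Prod>i\<in>?I - S. D i (p i))"
      proof (cases "\<forall>i\<in>?I - S. p i = i")
        case True
        have pS: "i \<in> S \<Longrightarrow> p i \<in> S" for i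
        proof (rule ccontr)
          assume i: "i \<in> S" and n: "p i \<notin> S"
          have "p i \<in> ?I" using i S pI by auto
          hence "p (p i) = p i" using True n by auto
          hence "p i = i" using permutes_inj[OF p] by (auto dest: injD)
          thus False using i n by simp
        qed
        have "(\<Prod>i\<in>?I - S. D i (p i)) = (\<Prod>i\<in>?I - S. x)"
          by (rule prod.cong, auto simp: D_def True)
        also have "\<dots> = x ^ (n - card S)" using cardd by simp
        finally have 1: "(\<Prod>i\<in>?I - S. D i (p i)) = x ^ (n - card S)" .
        have "(\<Prod>i\<in>?I. restr M S $$ (i, p i)) = (\<Prod>i\<in>S. restr M S $$ (i, p i)) * (\<Prod>i\<in>?I - S. restr M S $$ (i, p i))"
          using S by (simp add: prod.subset_diff mult.commute)
        also have "(\<Prod>i\<in>?I - S. restr M S $$ (i, p i)) = 1"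
          by (rule prod.neutral, auto simp: True restr_index[OF M])
        also have "(\<Prod>i\<in>S. restr M S $$ (i, p i)) = (\<Prod>i\<in>S. M $$ (i, p i))"
          by (rule prod.cong, simp, insert S pS, subst R, auto)
        finally show ?thesis using 1 by (simp add: mult.commute)
      next
        case False
        then obtain i where i: "i \<in> ?I - S" and pi: "p i \<noteq> i" by auto
        have "(\<Prod>i\<in>?I - S. D i (p i)) = 0"
          by (rule prod_zero, simp, rule bexI[OF _ i], simp add: D_def pi[symmetric])
        moreover have "(\<Prod>i\<in>?I. restr M S $$ (i, p i)) = 0"
          by (rule prod_zero, simp, rule bexI[of _ i], insert i pi, subst R, auto)
        ultimately show ?thesis by simp
      qed
      thus "signof p * (x ^ (n - card S) * (\<Prod>i\<in>?I. restr M S $$ (i, p i))) = signof p * ((\<Prod>i\<in>S. M $$ (i, p i)) * (\<Prod>i\<in>?I - S. D i (p i)))"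
        by simp
    qed
    finally show "(\<Sum>p\<in>?P. signof p * ((\<Prod>i\<in>S. M $$ (i, p i)) * (\<Prod>i\<in>?I - S. D i (p i)))) = x ^ (n - card S) * det (restr M S)"
      by simp
  qed
  finally show ?thesis .
qed

lemma const_hom: "comm_ring_hom (\<lambda>a::'a::comm_ring_1. [:a:])"
  by (unfold_locales, auto)

lemma det_map_const: "det (map_mat (\<lambda>a::'a::comm_ring_1. [:a:]) A) = [:det A:]"
  using comm_ring_hom.hom_det[OF const_hom] by blast

lemma map_const_mult: "A \<in> carrier_mat nr n \<Longrightarrow> B \<in> carrier_mat n nc \<Longrightarrow>
  map_mat (\<lambda>a::'a::comm_ring_1. [:a:]) (A * B) = map_mat (\<lambda>a. [:a:]) A * map_mat (\<lambda>a. [:a:]) B"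
  using semiring_hom.mat_hom_mult[of "\<lambda>a::'a. [:a:]"] const_hom
  by (metis comm_ring_hom.axioms(1) comm_semiring_hom.axioms(1) ring_hom.axioms(1))

lemma restr_map_const: "M \<in> carrier_mat n n \<Longrightarrow>
  restr (map_mat (\<lambda>a::'a::comm_ring_1. [:a:]) M) S = map_mat (\<lambda>a. [:a:]) (restr M S)"
  by (rule eq_matI, auto simp: restr_def)

lemma esym_restr:
  fixes M :: "'a::idom mat"
  assumes M: "M \<in> carrier_mat n n"
  shows "esym_mat k M = (\<Sum>S\<in>{S. S \<subseteq> {0..<n} \<and> card S = k}. det (restr M S))"
  unfolding esym_mat_def using M det_submatrix_restr[OF M] by (auto intro!: sum.cong)

lemma esym_coeff:
  fixes M :: "'a::idom mat"
  assumes M: "M \<in> carrier_mat n n" and k: "k \<le> n"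
  shows "esym_mat k M = coeff (det ([:0,1:] \<cdot>\<^sub>m 1\<^sub>m n + map_mat (\<lambda>a. [:a:]) M)) (n - k)"
proof -
  let ?h = "map_mat (\<lambda>a. [:a:])"
  have hM: "?h M \<in> carrier_mat n n" using M by simp
  have "det ([:0,1:] \<cdot>\<^sub>m 1\<^sub>m n + ?h M) = (\<Sum>S\<in>Pow {0..<n}. [:0,1:] ^ (n - card S) * det (restr (?h M) S))"
    by (rule det_diag_add[OF hM])
  also have "\<dots> = (\<Sum>S\<in>Pow {0..<n}. monom (det (restr M S)) (n - card S))"
    by (rule sum.cong, simp, simp add: restr_map_const[OF M] det_map_const monom_altdef mult.commute)
  finally have "coeff (det ([:0,1:] \<cdot>\<^sub>m 1\<^sub>m n + ?h M)) (n - k) = (\<Sum>S\<in>Pow {0..<n}. if n - card S = n - k then det (restr M S) else 0)"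
    by (simp add: coeff_sum coeff_monom)
  also have "\<dots> = (\<Sum>S\<in>Pow {0..<n}. if card S = k then det (restr M S) else 0)"
  proof (rule sum.cong, simp)
    fix S assume "S \<in> Pow {0..<n}"
    hence "card S \<le> n" using card_mono[of "{0..<n}" S] by auto
    hence "(n - card S = n - k) = (card S = k)" using k by auto
    thus "(if n - card S = n - k then det (restr M S) else 0) = (if card S = k then det (restr M S) else 0)" by simp
  qed
  also have "\<dots> = (\<Sum>S\<in>{S. S \<subseteq> {0..<n} \<and> card S = k}. det (restr M S))"
    by (subst sum.inter_filter[symmetric], simp, rule sum.cong, auto)
  finally show ?thesis using esym_restr[OF M] by simp
qed

lemma esym_big:
  assumes M: "M \<in> carrier_mat n n" and k: "n < k"
  shows "esym_mat k M = 0"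
proof -
  have "{Y. Y \<subseteq> {0..<n} \<and> card Y = k} = {}"
  proof (rule equals0I)
    fix Y assume "Y \<in> {Y. Y \<subseteq> {0..<n} \<and> card Y = k}"
    hence Y: "Y \<subseteq> {0..<n}" "card Y = k" by auto
    hence "card Y \<le> n" using card_mono[of "{0..<n}" Y] by simp
    thus False using k Y by simp
  qed
  moreover have "dim_row M = n" using M by simp
  ultimately have e: "{Y. Y \<subseteq> {0..<dim_row M} \<and> card Y = k} = {}" by simp
  show ?thesis unfolding esym_mat_def e by simp
qed

lemma esym_similar:
  fixes M Q :: "'a::idom mat"
  assumes M: "M \<in> carrier_mat n n" and Q: "Q \<in> carrier_mat n n" and QQ: "Q\<^sup>T * Q = 1\<^sub>m n"
  shows "esym_mat k (Q\<^sup>T * M * Q) = esym_mat k M"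
proof (cases "k \<le> n")
  case False
  have "Q\<^sup>T * M * Q \<in> carrier_mat n n" using M Q by simp
  hence "esym_mat k (Q\<^sup>T * M * Q) = 0" by (rule esym_big, insert False, simp)
  moreover have "esym_mat k M = 0" by (rule esym_big[OF M], insert False, simp)
  ultimately show ?thesis by simp
next
  case True
  let ?h = "map_mat (\<lambda>a::'a. [:a:])"
  let ?X = "[:0,1:] \<cdot>\<^sub>m 1\<^sub>m n :: 'a poly mat"
  have QT: "Q\<^sup>T \<in> carrier_mat n n" using Q by simp
  have hQ: "?h Q \<in> carrier_mat n n" and hQT: "?h Q\<^sup>T \<in> carrier_mat n n" and hM: "?h M \<in> carrier_mat n n"
    using Q M by auto
  have X: "?X \<in> carrier_mat n n" by simp
  have hQQ: "?h Q\<^sup>T * ?h Q = 1\<^sub>m n"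
  proof -
    have "?h (1\<^sub>m n) = (1\<^sub>m n :: 'a poly mat)" by (rule eq_matI, auto)
    thus ?thesis using map_const_mult[OF QT Q] QQ by metis
  qed
  have hprod: "?h (Q\<^sup>T * M * Q) = ?h Q\<^sup>T * ?h M * ?h Q"
    using map_const_mult[OF _ Q, of "Q\<^sup>T * M" n] map_const_mult[OF QT M] QT M by simp
  have eq: "?X + ?h (Q\<^sup>T * M * Q) = ?h Q\<^sup>T * (?X + ?h M) * ?h Q"
  proof -
    have "?h Q\<^sup>T * (?X + ?h M) * ?h Q = (?h Q\<^sup>T * ?X + ?h Q\<^sup>T * ?h M) * ?h Q"
      by (subst mult_add_distrib_mat[OF hQT X hM], simp)
    also have "\<dots> = ?h Q\<^sup>T * ?X * ?h Q + ?h Q\<^sup>T * ?h M * ?h Q"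
      by (rule add_mult_distrib_mat[of _ n n], insert hQT X hM hQ, auto)
    also have "?h Q\<^sup>T * ?X * ?h Q = ?X"
    proof -
      have "?h Q\<^sup>T * ?X = [:0,1:] \<cdot>\<^sub>m ?h Q\<^sup>T"
        using mult_smult_distrib[OF hQT, of "1\<^sub>m n" n "[:0,1:]"] hQT by simp
      hence "?h Q\<^sup>T * ?X * ?h Q = [:0,1:] \<cdot>\<^sub>m (?h Q\<^sup>T * ?h Q)"
        using mult_smult_assoc_mat[OF hQT hQ] by simp
      thus ?thesis using hQQ by simp
    qed
    finally show ?thesis using hprod by simp
  qed
  have "det (?X + ?h (Q\<^sup>T * M * Q)) = det (?X + ?h M)"
  proof -
    have c: "?X + ?h M \<in> carrier_mat n n" using hM by simp
    have "det (?X + ?h (Q\<^sup>T * M * Q)) = det (?h Q\<^sup>T) * det (?X + ?h M) * det (?h Q)"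
      unfolding eq using det_mult[OF mult_carrier_mat[OF hQT c] hQ] det_mult[OF hQT c] by simp
    also have "\<dots> = det (?h Q\<^sup>T * ?h Q) * det (?X + ?h M)"
      using det_mult[OF hQT hQ] by (simp add: ac_simps)
    finally show ?thesis using hQQ by simp
  qed
  moreover have "Q\<^sup>T * M * Q \<in> carrier_mat n n" using M Q by simp
  ultimately show ?thesis using esym_coeff[OF _ True] M by metis
qed

lemma deg1_poly: "degree (p :: 'a::comm_ring_1 poly) \<le> 1 \<Longrightarrow> p = [:coeff p 0, coeff p 1:]"
  by (rule poly_eqI, rename_tac k, case_tac k, simp, rename_tac k', case_tac k', auto simp: coeff_eq_0)

lemma prod_lin_coeff:
  fixes f :: "nat \<Rightarrow> 'a::comm_ring_1 poly"
  assumes "finite I"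
  shows "J \<subseteq> I \<Longrightarrow> (\<forall>i\<in>I. degree (f i) \<le> 1) \<Longrightarrow> (\<forall>i\<in>I - J. degree (f i) = 0) \<Longrightarrow>
    degree (\<Prod>i\<in>I. f i) \<le> card J \<and>
    coeff (\<Prod>i\<in>I. f i) (card J) = (\<Prod>i\<in>I. if i \<in> J then coeff (f i) 1 else coeff (f i) 0)"
  using assms
proof (induction I arbitrary: J rule: finite_induct)
  case empty
  then show ?case by simp
next
  case (insert x I)
  show ?case
  proof (cases "x \<in> J")
    case True
    define J' where "J' = J - {x}"
    have J': "J' \<subseteq> I" using insert.prems(1) insert.hyps(2) unfolding J'_def by auto
    have finJ': "finite J'" using J' insert.hyps(1) finite_subset by auto
    have cJ: "card J = Suc (card J')" unfolding J'_def using True finJ' J'_def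
      by (metis card.insert insert_Diff insert_absorb2 J' insert.hyps(2) mk_disjoint_insert subsetD)
    have z: "\<forall>i\<in>I - J'. degree (f i) = 0"
    proof
      fix i assume "i \<in> I - J'"
      hence "i \<in> insert x I - J" using insert.hyps(2) J'_def by auto
      thus "degree (f i) = 0" using insert.prems(3) by (auto simp del: One_nat_def)
    qed
    have IH: "degree (\<Prod>i\<in>I. f i) \<le> card J' \<and>
      coeff (\<Prod>i\<in>I. f i) (card J') = (\<Prod>i\<in>I. if i \<in> J' then coeff (f i) 1 else coeff (f i) 0)"
      using insert.IH[OF J' _ z] insert.prems(2) by auto
    let ?P = "\<Prod>i\<in>I. f i"
    have fx: "f x = [:coeff (f x) 0, coeff (f x) 1:]" using deg1_poly insert.prems(2) by auto
    have "degree (f x * ?P) \<le> degree (f x) + degree ?P" by (rule degree_mult_le)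
    also have "\<dots> \<le> 1 + card J'" using IH insert.prems(2) by auto
    finally have d: "degree (f x * ?P) \<le> card J" using cJ by simp
    have "coeff (f x * ?P) (Suc (card J')) = coeff (f x) 1 * coeff ?P (card J')"
    proof -
      have "coeff ?P (Suc (card J')) = 0" using IH by (intro coeff_eq_0) auto
      thus ?thesis by (subst fx, simp)
    qed
    also have "\<dots> = (\<Prod>i\<in>insert x I. if i \<in> J then coeff (f i) 1 else coeff (f i) 0)"
    proof -
      have "(\<Prod>i\<in>I. if i \<in> J' then coeff (f i) 1 else coeff (f i) 0) = (\<Prod>i\<in>I. if i \<in> J then coeff (f i) 1 else coeff (f i) 0)"
        by (rule prod.cong, simp, insert insert.hyps(2), auto simp: J'_def)
      thus ?thesis using IH True insert.hyps by simp
    qed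
    finally show ?thesis using d cJ insert.hyps by simp
  next
    case False
    have J: "J \<subseteq> I" using insert.prems(1) False by auto
    have IH: "degree (\<Prod>i\<in>I. f i) \<le> card J \<and>
      coeff (\<Prod>i\<in>I. f i) (card J) = (\<Prod>i\<in>I. if i \<in> J then coeff (f i) 1 else coeff (f i) 0)"
      using insert.IH[OF J] insert.prems by auto
    let ?P = "\<Prod>i\<in>I. f i"
    have dx: "degree (f x) = 0" using insert.prems(3) False by auto
    have fx: "f x = [:coeff (f x) 0:]" using dx by (metis degree_0_id)
    have "degree (f x * ?P) \<le> degree (f x) + degree ?P" by (rule degree_mult_le)
    hence d: "degree (f x * ?P) \<le> card J" using IH dx by simp
    have "coeff (f x * ?P) (card J) = coeff (f x) 0 * coeff ?P (card J)"
      by (subst fx, simp)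
    thus ?thesis using d IH False insert.hyps by simp
  qed
qed

lemma det_lin_top:
  fixes N :: "'a::comm_ring_1 poly mat" and u w :: "nat \<Rightarrow> nat \<Rightarrow> 'a"
  assumes N: "N \<in> carrier_mat m m"
    and Nij: "\<And>i j. i < m \<Longrightarrow> j < m \<Longrightarrow> N $$ (i,j) = [:u i j, w i j:]"
    and pm: "p \<le> m"
    and w0: "\<And>i j. p \<le> i \<Longrightarrow> i < m \<Longrightarrow> j < m \<Longrightarrow> w i j = 0"
  shows "degree (det N) \<le> p \<and> coeff (det N) p = det (mat m m (\<lambda>(i,j). if i < p then w i j else u i j))"
proof -
  let ?I = "{0..<m}"
  let ?P = "{q. q permutes ?I}"
  let ?K = "mat m m (\<lambda>(i,j). if i < p then w i j else u i j)"
  have K: "?K \<in> carrier_mat m m" by simp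
  have each: "degree (\<Prod>i\<in>?I. N $$ (i, q i)) \<le> p \<and> coeff (\<Prod>i\<in>?I. N $$ (i, q i)) p = (\<Prod>i\<in>?I. ?K $$ (i, q i))"
    if q: "q permutes ?I" for q
  proof -
    have qi: "i < m \<Longrightarrow> q i < m" for i using q by (simp add: permutes_in_image)
    have "degree (\<Prod>i\<in>?I. N $$ (i, q i)) \<le> card {0..<p} \<and>
      coeff (\<Prod>i\<in>?I. N $$ (i, q i)) (card {0..<p}) = (\<Prod>i\<in>?I. if i \<in> {0..<p} then coeff (N $$ (i, q i)) 1 else coeff (N $$ (i, q i)) 0)"
      by (rule prod_lin_coeff, simp, insert pm, auto simp: Nij qi w0)
    moreover have "(\<Prod>i\<in>?I. if i \<in> {0..<p} then coeff (N $$ (i, q i)) 1 else coeff (N $$ (i, q i)) 0) = (\<Prod>i\<in>?I. ?K $$ (i, q i))"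
      by (rule prod.cong, auto simp: Nij qi)
    ultimately show ?thesis by simp
  qed
  have sgn: "degree (signof q * P) \<le> degree P \<and> coeff (signof q * P) k = signof q * coeff P k" for q and P :: "'a poly" and k
    by (cases "sign q = 1", auto simp: sign_def)
  have "degree (det N) \<le> p"
    unfolding det_def'[OF N]
  proof (rule degree_sum_le)
    fix q assume "q \<in> ?P"
    hence "degree (\<Prod>i\<in>?I. N $$ (i, q i)) \<le> p" using each by auto
    moreover have "degree (signof q * (\<Prod>i\<in>?I. N $$ (i, q i))) \<le> degree (\<Prod>i\<in>?I. N $$ (i, q i))"
      using sgn by blast
    ultimately show "degree (signof q * (\<Prod>i\<in>?I. N $$ (i, q i))) \<le> p" by linarith
  qed (simp add: finite_permutations)
  moreover have "coeff (det N) p = det ?K"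
    unfolding det_def'[OF N] det_def'[OF K] coeff_sum
  proof (rule sum.cong)
    fix q assume "q \<in> ?P"
    thus "coeff (signof q * (\<Prod>i\<in>?I. N $$ (i, q i))) p = signof q * (\<Prod>i\<in>?I. ?K $$ (i, q i))"
      using each[of q] sgn[of q "\<Prod>i\<in>?I. N $$ (i, q i)" p] by simp
  qed (simp add: finite_permutations)
  ultimately show ?thesis by simp
qed

lemma det_zero_row_gen:
  fixes K :: "'a::comm_ring_1 mat"
  assumes K: "K \<in> carrier_mat n n" and i: "i < n" and z: "\<And>j. j < n \<Longrightarrow> K $$ (i,j) = 0"
  shows "det K = 0"
proof -
  have "(\<Sum>p\<in>{p. p permutes {0..<n}}. signof p * (\<Prod>l\<in>{0..<n}. K $$ (l, p l))) = 0"
  proof (rule sum.neutral, rule ballI)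
    fix p assume "p \<in> {p. p permutes {0..<n}}"
    hence "p i < n" using i by (simp add: permutes_in_image)
    hence "K $$ (i, p i) = 0" using z by simp
    hence "(\<Prod>l\<in>{0..<n}. K $$ (l, p l)) = 0" by (intro prod_zero, simp) (rule bexI[of _ i], insert i, auto)
    thus "signof p * (\<Prod>l\<in>{0..<n}. K $$ (l, p l)) = 0" by simp
  qed
  thus ?thesis unfolding det_def'[OF K] .
qed

lemma K_det:
  fixes B C :: "'a::idom mat"
  assumes B: "B \<in> carrier_mat n n" and C: "C \<in> carrier_mat n n" and rn: "r \<le> n"
    and C0: "\<And>i j. i < n \<Longrightarrow> j < n \<Longrightarrow> r \<le> i \<or> r \<le> j \<Longrightarrow> C $$ (i,j) = 0"
    and Y: "Y \<subseteq> {0..<n}"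
  shows "det (mat n n (\<lambda>(i,j). if i < r then (if i \<in> Y \<and> j \<in> Y then C $$ (i,j) else 0) else restr B Y $$ (i,j)))
    = (if {0..<r} \<subseteq> Y then det (mat r r (\<lambda>(i,j). C $$ (i,j))) *
         det (restr (mat (n-r) (n-r) (\<lambda>(i,j). B $$ (r+i, r+j))) {j. r + j \<in> Y}) else 0)"
  (is "det ?K = _")
proof (cases "{0..<r} \<subseteq> Y")
  case False
  have "\<exists>i. i < r \<and> i \<notin> Y" using False by (auto simp: subset_iff)
  then obtain i where i: "i < r" "i \<notin> Y" by blast
  have "det ?K = 0" by (rule det_zero_row_gen[of _ n i], insert i rn, auto)
  thus ?thesis using False by simp
next
  case True
  let ?S = "mat r r (\<lambda>(i,j). C $$ (i,j))"
  let ?B22 = "mat (n-r) (n-r) (\<lambda>(i,j). B $$ (r+i, r+j))"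
  let ?Z = "{j. r + j \<in> Y}"
  let ?K21 = "mat (n-r) r (\<lambda>(i,j). restr B Y $$ (r+i, j))"
  have S: "?S \<in> carrier_mat r r" by simp
  have B22: "restr ?B22 ?Z \<in> carrier_mat (n-r) (n-r)" by simp
  have eq: "?K = four_block_mat ?S (0\<^sub>m r (n-r)) ?K21 (restr ?B22 ?Z)"
  proof (rule eq_matI)
    fix i j assume "i < dim_row (four_block_mat ?S (0\<^sub>m r (n-r)) ?K21 (restr ?B22 ?Z))"
      "j < dim_col (four_block_mat ?S (0\<^sub>m r (n-r)) ?K21 (restr ?B22 ?Z))"
    hence i: "i < n" and j: "j < n" using rn by (auto simp: restr_def)
    have rhs: "four_block_mat ?S (0\<^sub>m r (n-r)) ?K21 (restr ?B22 ?Z) $$ (i,j) =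
      (if i < r then if j < r then C $$ (i,j) else 0 else if j < r then restr B Y $$ (i,j)
        else restr ?B22 ?Z $$ (i - r, j - r))"
      using i j rn by (auto simp: restr_def)
    have lhs: "?K $$ (i,j) = (if i < r then (if i \<in> Y \<and> j \<in> Y then C $$ (i,j) else 0) else restr B Y $$ (i,j))"
      using i j by simp
    have b22: "\<not> i < r \<Longrightarrow> \<not> j < r \<Longrightarrow> restr ?B22 ?Z $$ (i - r, j - r) = restr B Y $$ (i,j)"
      using i j B by (auto simp: restr_def)
    show "?K $$ (i,j) = four_block_mat ?S (0\<^sub>m r (n-r)) ?K21 (restr ?B22 ?Z) $$ (i,j)"
      unfolding lhs rhs using b22 True C0 i j by auto
  qed (insert rn, auto simp: restr_def)
  have "det ?K = det ?S * det (restr ?B22 ?Z)"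
    unfolding eq by (rule det_four_block_mat_upper_right_zero[OF S refl _ B22], auto)
  thus ?thesis using True by simp
qed

lemma sum_reindex_Y:
  fixes g :: "nat set \<Rightarrow> 'b::comm_monoid_add"
  assumes rk: "r \<le> k" and rn: "r \<le> n"
  shows "(\<Sum>Y\<in>{Y. Y \<subseteq> {0..<n} \<and> card Y = k}. if {0..<r} \<subseteq> Y then g {j. r + j \<in> Y} else 0)
    = (\<Sum>Z\<in>{Z. Z \<subseteq> {0..<n-r} \<and> card Z = k - r}. g Z)"
proof -
  have fin: "finite {Y. Y \<subseteq> {0..<n} \<and> card Y = k}" by simp
  have "(\<Sum>Y\<in>{Y. Y \<subseteq> {0..<n} \<and> card Y = k}. if {0..<r} \<subseteq> Y then g {j. r + j \<in> Y} else 0)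
    = (\<Sum>Y\<in>{Y \<in> {Y. Y \<subseteq> {0..<n} \<and> card Y = k}. {0..<r} \<subseteq> Y}. g {j. r + j \<in> Y})"
    by (rule sum.inter_filter[OF fin, symmetric])
  also have "\<dots> = (\<Sum>Z\<in>{Z. Z \<subseteq> {0..<n-r} \<and> card Z = k - r}. g Z)"
  proof (rule sum.reindex_bij_witness[where i = "\<lambda>Z. {0..<r} \<union> (\<lambda>z. r + z) ` Z" and j = "\<lambda>Y. {j. r + j \<in> Y}"])
    have split: "Y = {0..<r} \<union> (\<lambda>z. r + z) ` {j. r + j \<in> Y}" if "{0..<r} \<subseteq> Y" for Y :: "nat set"
    proof
      show "Y \<subseteq> {0..<r} \<union> (\<lambda>z. r + z) ` {j. r + j \<in> Y}"
      proof
        fix y assume y: "y \<in> Y"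
        show "y \<in> {0..<r} \<union> (\<lambda>z. r + z) ` {j. r + j \<in> Y}"
        proof (cases "y < r")
          case False
          hence "y = r + (y - r)" by simp
          thus ?thesis using y by (metis (mono_tags, lifting) UnI2 image_eqI mem_Collect_eq)
        qed simp
      qed
    qed (insert that, auto)
    have cardsplit: "card ({0..<r} \<union> (\<lambda>z. r + z) ` Z) = r + card Z" if "finite Z" for Z
    proof -
      have "card ({0..<r} \<union> (\<lambda>z. r + z) ` Z) = card {0..<r} + card ((\<lambda>z. r + z) ` Z)"
        by (rule card_Un_disjoint, auto simp: that)
      also have "card ((\<lambda>z. r + z) ` Z) = card Z" by (rule card_image, auto simp: inj_on_def)
      finally show ?thesis by simp
    qed
    fix Y assume Y: "Y \<in> {Y \<in> {Y. Y \<subseteq> {0..<n} \<and> card Y = k}. {0..<r} \<subseteq> Y}"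
    show "{0..<r} \<union> (\<lambda>z. r + z) ` {j. r + j \<in> Y} = Y" using split Y by auto
    have fZ: "finite {j. r + j \<in> Y}"
    proof -
      have "{j. r + j \<in> Y} \<subseteq> {0..<n}" using Y by auto
      thus ?thesis using finite_subset by blast
    qed
    have "card Y = r + card {j. r + j \<in> Y}" using cardsplit[OF fZ] split Y by auto
    thus "{j. r + j \<in> Y} \<in> {Z. Z \<subseteq> {0..<n-r} \<and> card Z = k - r}" using Y by auto
    show "g {j. r + j \<in> Y} = g {j. r + j \<in> Y}" by simp
  next
    fix Z assume Z: "Z \<in> {Z. Z \<subseteq> {0..<n-r} \<and> card Z = k - r}"
    show "{j. r + j \<in> {0..<r} \<union> (\<lambda>z. r + z) ` Z} = Z" by auto
    have fZ: "finite Z" using Z finite_subset by auto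
    have "card ({0..<r} \<union> (\<lambda>z. r + z) ` Z) = r + card Z"
      by (rule card_Un_disjoint[THEN trans], auto simp: fZ card_image inj_on_def)
    thus "{0..<r} \<union> (\<lambda>z. r + z) ` Z \<in> {Y \<in> {Y. Y \<subseteq> {0..<n} \<and> card Y = k}. {0..<r} \<subseteq> Y}"
      using Z rk rn by auto
  qed
  finally show ?thesis .
qed

lemma mult_entry: "A \<in> carrier_mat nr m \<Longrightarrow> B \<in> carrier_mat m nc \<Longrightarrow> i < nr \<Longrightarrow> j < nc \<Longrightarrow>
  (A * B) $$ (i,j) = (\<Sum>l\<in>{0..<m}. A $$ (i,l) * B $$ (l,j))"
  by (auto simp: scalar_prod_def intro!: sum.cong)

locale lctx =
  fixes A V Qfull R :: "real mat" and n r :: nat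
  assumes A: "A \<in> carrier_mat n n" and V: "V \<in> carrier_mat n r" and rn: "r \<le> n"
    and Q: "Qfull \<in> carrier_mat n n" and QQ: "Qfull\<^sup>T * Qfull = 1\<^sub>m n"
    and R: "R \<in> carrier_mat r r"
    and VQR: "V = Qfull * (R @\<^sub>r 0\<^sub>m (n - r) r)"
begin

definition "E = R @\<^sub>r 0\<^sub>m (n - r) r"
definition "B = Qfull\<^sup>T * A * Qfull"
definition "C = E * E\<^sup>T"
definition "B22 = mat (n-r) (n-r) (\<lambda>(i,j). B $$ (r+i, r+j))"
definition "S = mat r r (\<lambda>(i,j). C $$ (i,j))"

lemma E: "E \<in> carrier_mat n r"
proof -
  have "E \<in> carrier_mat (r + (n - r)) r" unfolding E_def using R by auto
  thus ?thesis using rn by simp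
qed

lemma E_idx: "i < n \<Longrightarrow> l < r \<Longrightarrow> E $$ (i,l) = (if i < r then R $$ (i,l) else 0)"
  unfolding E_def append_rows_def using R rn by auto

lemma QT: "Qfull\<^sup>T \<in> carrier_mat n n" using Q by simp

lemma QtV: "Qfull\<^sup>T * V = E"
proof -
  have "Qfull\<^sup>T * V = (Qfull\<^sup>T * Qfull) * E" unfolding VQR E_def[symmetric]
    using QT Q E by simp
  thus ?thesis using QQ E by simp
qed

lemma VtQ: "V\<^sup>T * Qfull = E\<^sup>T"
  using transpose_mult[OF QT V] QtV by simp

lemma B: "B \<in> carrier_mat n n" unfolding B_def using A Q by simp
lemma C: "C \<in> carrier_mat n n" unfolding C_def using E by simp

lemma C_idx: "i < n \<Longrightarrow> j < n \<Longrightarrow> C $$ (i,j) = (\<Sum>l\<in>{0..<r}. E $$ (i,l) * E $$ (j,l))"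
  unfolding C_def using mult_entry[OF E, of "E\<^sup>T" n i j] E by simp

lemma C0: "i < n \<Longrightarrow> j < n \<Longrightarrow> r \<le> i \<or> r \<le> j \<Longrightarrow> C $$ (i,j) = 0"
  unfolding C_idx by (rule sum.neutral, auto simp: E_idx)

lemma QWQ: "Qfull\<^sup>T * (V * V\<^sup>T) * Qfull = C"
proof -
  have VT: "V\<^sup>T \<in> carrier_mat r n" using V by simp
  have "Qfull\<^sup>T * (V * V\<^sup>T) * Qfull = (Qfull\<^sup>T * V) * (V\<^sup>T * Qfull)"
  proof -
    have QV: "Qfull\<^sup>T * V \<in> carrier_mat n r" using QT V by simp
    have "Qfull\<^sup>T * (V * V\<^sup>T) = (Qfull\<^sup>T * V) * V\<^sup>T" using assoc_mult_mat[OF QT V VT] by simp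
    thus ?thesis using assoc_mult_mat[OF QV VT Q] by simp
  qed
  thus ?thesis unfolding QtV VtQ C_def .
qed

lemma VtV: "V\<^sup>T * V = E\<^sup>T * E"
proof -
  have ET: "E\<^sup>T \<in> carrier_mat r n" using E by simp
  have "V\<^sup>T * V = (V\<^sup>T * Qfull) * E" unfolding VQR E_def[symmetric] using V Q E
    by (metis VQR E_def QT assoc_mult_mat transpose_carrier_mat)
  thus ?thesis unfolding VtQ .
qed

lemma detS: "det S = det (V\<^sup>T * V)"
proof -
  have RT: "R\<^sup>T \<in> carrier_mat r r" using R by simp
  have "S = R * R\<^sup>T"
  proof (rule eq_matI)
    fix i j assume "i < dim_row (R * R\<^sup>T)" "j < dim_col (R * R\<^sup>T)"
    hence ij: "i < r" "j < r" using R by auto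
    show "S $$ (i,j) = (R * R\<^sup>T) $$ (i,j)"
      unfolding mult_entry[OF R RT ij] S_def using ij rn C_idx[of i j] E_idx R by (auto intro!: sum.cong)
  qed (insert R, auto simp: S_def)
  hence 1: "det S = det R * det R" using det_mult[OF R RT] det_transpose[OF R] by simp
  have ET: "E\<^sup>T \<in> carrier_mat r n" using E by simp
  have "E\<^sup>T * E = R\<^sup>T * R"
  proof (rule eq_matI)
    fix i j assume "i < dim_row (R\<^sup>T * R)" "j < dim_col (R\<^sup>T * R)"
    hence ij: "i < r" "j < r" using R by auto
    have "(E\<^sup>T * E) $$ (i,j) = (\<Sum>l\<in>{0..<n}. E $$ (l,i) * E $$ (l,j))"
      unfolding mult_entry[OF ET E ij] using ij E by simp
    also have "\<dots> = (\<Sum>l\<in>{0..<r}. E $$ (l,i) * E $$ (l,j))"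
      by (rule sum.mono_neutral_right, insert rn ij, auto simp: E_idx)
    also have "\<dots> = (R\<^sup>T * R) $$ (i,j)"
      unfolding mult_entry[OF RT R ij] using ij R rn by (auto simp: E_idx intro!: sum.cong)
    finally show "(E\<^sup>T * E) $$ (i,j) = (R\<^sup>T * R) $$ (i,j)" .
  qed (insert R E, auto)
  hence "det (V\<^sup>T * V) = det R * det R" unfolding VtV using det_mult[OF RT R] det_transpose[OF R] by simp
  thus ?thesis using 1 by simp
qed

lemma B22_Qperp: "(mat n (n - r) (\<lambda>(i, j). Qfull $$ (i, r + j)))\<^sup>T * A * mat n (n - r) (\<lambda>(i, j). Qfull $$ (i, r + j)) = B22"
  (is "?P\<^sup>T * A * ?P = _")
proof (rule eq_matI)
  have P: "?P \<in> carrier_mat n (n-r)" by simp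
  have PT: "?P\<^sup>T \<in> carrier_mat (n-r) n" by simp
  fix i j assume "i < dim_row B22" "j < dim_col B22"
  hence ij: "i < n - r" "j < n - r" by (auto simp: B22_def)
  have PTA: "?P\<^sup>T * A \<in> carrier_mat (n-r) n" using mult_carrier_mat[OF PT A] .
  have QTA: "Qfull\<^sup>T * A \<in> carrier_mat n n" using QT A by simp
  have ri: "r + i < n" "r + j < n" using ij by auto
  have "(?P\<^sup>T * A * ?P) $$ (i,j) = (\<Sum>l\<in>{0..<n}. (?P\<^sup>T * A) $$ (i,l) * ?P $$ (l,j))"
    by (rule mult_entry[OF PTA P ij])
  also have "\<dots> = (\<Sum>l\<in>{0..<n}. (Qfull\<^sup>T * A) $$ (r+i,l) * Qfull $$ (l,r+j))"
  proof (rule sum.cong, simp)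
    fix l assume l: "l \<in> {0..<n}"
    have "(?P\<^sup>T * A) $$ (i,l) = (\<Sum>m\<in>{0..<n}. ?P\<^sup>T $$ (i,m) * A $$ (m,l))"
      using mult_entry[OF PT A] ij l by simp
    also have "\<dots> = (\<Sum>m\<in>{0..<n}. Qfull\<^sup>T $$ (r+i,m) * A $$ (m,l))"
      by (rule sum.cong, insert ij Q, auto)
    also have "\<dots> = (Qfull\<^sup>T * A) $$ (r+i,l)" using mult_entry[OF QT A] ri l by simp
    finally show "(?P\<^sup>T * A) $$ (i,l) * ?P $$ (l,j) = (Qfull\<^sup>T * A) $$ (r+i,l) * Qfull $$ (l,r+j)"
      using l ij by simp
  qed
  also have "\<dots> = B $$ (r+i, r+j)" unfolding B_def using mult_entry[OF QTA Q] ri by simp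
  finally show "(?P\<^sup>T * A * ?P) $$ (i,j) = B22 $$ (i,j)" unfolding B22_def using ij by simp
qed (auto simp: B22_def)

end

context lctx
begin

abbreviation "hm \<equiv> map_mat (\<lambda>a::real. [:a:])"
definition "N = hm B + [:0,1:] \<cdot>\<^sub>m hm C"

lemma N: "N \<in> carrier_mat n n" unfolding N_def using B C by simp

lemma N_idx: "i < n \<Longrightarrow> j < n \<Longrightarrow> N $$ (i,j) = [:B $$ (i,j), C $$ (i,j):]"
  unfolding N_def using B C by simp

lemma pencil: "pencil_mat A V \<in> carrier_mat n n"
  unfolding pencil_mat_def using A V by simp

lemma rot: "(hm Qfull)\<^sup>T * pencil_mat A V * hm Qfull = N"
proof -
  let ?W = "V * V\<^sup>T"
  have W: "?W \<in> carrier_mat n n" using V by simp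
  have hQ: "hm Qfull \<in> carrier_mat n n" and hQT: "(hm Qfull)\<^sup>T \<in> carrier_mat n n"
    and hA: "hm A \<in> carrier_mat n n" and hW: "hm ?W \<in> carrier_mat n n" using Q A W by auto
  have XW: "[:0,1:] \<cdot>\<^sub>m hm ?W \<in> carrier_mat n n" using hW by simp
  have hT: "(hm Qfull)\<^sup>T = hm (Qfull\<^sup>T)" by (rule map_mat_transpose)
  have h3: "(hm Qfull)\<^sup>T * hm M * hm Qfull = hm (Qfull\<^sup>T * M * Qfull)" if M: "M \<in> carrier_mat n n" for M
  proof -
    have "hm (Qfull\<^sup>T * M * Qfull) = hm (Qfull\<^sup>T * M) * hm Qfull"
      using map_const_mult[OF mult_carrier_mat[OF QT M] Q] .
    also have "hm (Qfull\<^sup>T * M) = hm (Qfull\<^sup>T) * hm M" using map_const_mult[OF QT M] .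
    finally show ?thesis unfolding hT by simp
  qed
  have "(hm Qfull)\<^sup>T * pencil_mat A V = (hm Qfull)\<^sup>T * hm A + (hm Qfull)\<^sup>T * ([:0,1:] \<cdot>\<^sub>m hm ?W)"
    unfolding pencil_mat_def by (rule mult_add_distrib_mat[OF hQT hA XW])
  also have "(hm Qfull)\<^sup>T * ([:0,1:] \<cdot>\<^sub>m hm ?W) = [:0,1:] \<cdot>\<^sub>m ((hm Qfull)\<^sup>T * hm ?W)"
    by (rule mult_smult_distrib[OF hQT hW])
  finally have 1: "(hm Qfull)\<^sup>T * pencil_mat A V = (hm Qfull)\<^sup>T * hm A + [:0,1:] \<cdot>\<^sub>m ((hm Qfull)\<^sup>T * hm ?W)" .
  have c1: "(hm Qfull)\<^sup>T * hm A \<in> carrier_mat n n" using hQT hA by simp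
  have c2: "[:0,1:] \<cdot>\<^sub>m ((hm Qfull)\<^sup>T * hm ?W) \<in> carrier_mat n n" using hQT hW by simp
  have "(hm Qfull)\<^sup>T * pencil_mat A V * hm Qfull =
     (hm Qfull)\<^sup>T * hm A * hm Qfull + ([:0,1:] \<cdot>\<^sub>m ((hm Qfull)\<^sup>T * hm ?W)) * hm Qfull"
    unfolding 1 by (rule add_mult_distrib_mat[OF c1 c2 hQ])
  also have "([:0,1:] \<cdot>\<^sub>m ((hm Qfull)\<^sup>T * hm ?W)) * hm Qfull = [:0,1:] \<cdot>\<^sub>m ((hm Qfull)\<^sup>T * hm ?W * hm Qfull)"
    by (rule mult_smult_assoc_mat[OF mult_carrier_mat[OF hQT hW] hQ])
  also have "(hm Qfull)\<^sup>T * hm ?W * hm Qfull = hm C" using h3[OF W] QWQ by simp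
  also have "(hm Qfull)\<^sup>T * hm A * hm Qfull = hm B" using h3[OF A] B_def by simp
  finally show ?thesis unfolding N_def .
qed

lemma hQQ: "(hm Qfull)\<^sup>T * hm Qfull = 1\<^sub>m n"
proof -
  have "hm (1\<^sub>m n) = (1\<^sub>m n :: real poly mat)" by (rule eq_matI, auto)
  moreover have "(hm Qfull)\<^sup>T = hm (Qfull\<^sup>T)" by (rule map_mat_transpose)
  ultimately show ?thesis using map_const_mult[OF QT Q] QQ by metis
qed

lemma esym_pencil: "esym_mat k (pencil_mat A V) = esym_mat k N"
  using esym_similar[OF pencil _ hQQ, of k] Q rot by simp

lemma per_Y:
  assumes Y: "Y \<subseteq> {0..<n}"
  shows "degree (det (restr N Y)) \<le> r \<and> coeff (det (restr N Y)) r =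
    (if {0..<r} \<subseteq> Y then det S * det (restr B22 {j. r + j \<in> Y}) else 0)"
proof -
  have RN: "restr N Y \<in> carrier_mat n n" using N by simp
  have idx: "restr N Y $$ (i,j) = [: restr B Y $$ (i,j), (if i \<in> Y \<and> j \<in> Y then C $$ (i,j) else 0) :]"
    if "i < n" "j < n" for i j
    using restr_index[OF N that, of Y] restr_index[OF B that, of Y] N_idx[OF that] by (auto simp: one_pCons)
  have w0: "(if i \<in> Y \<and> j \<in> Y then C $$ (i,j) else 0) = 0" if "r \<le> i" "i < n" "j < n" for i j
    using C0 that by auto
  have "degree (det (restr N Y)) \<le> r \<and> coeff (det (restr N Y)) r =
    det (mat n n (\<lambda>(i,j). if i < r then (if i \<in> Y \<and> j \<in> Y then C $$ (i,j) else 0) else restr B Y $$ (i,j)))"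
    by (rule det_lin_top[OF RN idx rn w0])
  also have "det (mat n n (\<lambda>(i,j). if i < r then (if i \<in> Y \<and> j \<in> Y then C $$ (i,j) else 0) else restr B Y $$ (i,j)))
     = (if {0..<r} \<subseteq> Y then det S * det (restr B22 {j. r + j \<in> Y}) else 0)"
    unfolding S_def B22_def by (rule K_det[OF B C rn C0 Y])
  finally show ?thesis .
qed

lemma B22: "B22 \<in> carrier_mat (n-r) (n-r)" unfolding B22_def by simp

lemma part1: "r \<le> k \<Longrightarrow> degree (esym_mat k (pencil_mat A V)) \<le> r \<and>
   coeff (esym_mat k (pencil_mat A V)) r = det (V\<^sup>T * V) * esym_mat (k - r) B22"
proof -
  assume rk: "r \<le> k"
  have e: "esym_mat k (pencil_mat A V) = (\<Sum>Y\<in>{Y. Y \<subseteq> {0..<n} \<and> card Y = k}. det (restr N Y))"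
    unfolding esym_pencil by (rule esym_restr[OF N])
  have deg: "degree (esym_mat k (pencil_mat A V)) \<le> r"
    unfolding e by (rule degree_sum_le, simp, insert per_Y, auto)
  have "coeff (esym_mat k (pencil_mat A V)) r =
     (\<Sum>Y\<in>{Y. Y \<subseteq> {0..<n} \<and> card Y = k}. if {0..<r} \<subseteq> Y then det S * det (restr B22 {j. r + j \<in> Y}) else 0)"
    unfolding e coeff_sum by (rule sum.cong, simp, insert per_Y, auto)
  also have "\<dots> = (\<Sum>Z\<in>{Z. Z \<subseteq> {0..<n-r} \<and> card Z = k - r}. det S * det (restr B22 Z))"
    by (rule sum_reindex_Y[OF rk rn])
  also have "\<dots> = det S * esym_mat (k - r) B22"
    unfolding esym_restr[OF B22] by (simp add: sum_distrib_left)
  finally show ?thesis using detS deg by simp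
qed

end

context lctx
begin

lemma detVtV: "det (V\<^sup>T * V) = det R * det R"
proof -
  have RT: "R\<^sup>T \<in> carrier_mat r r" using R by simp
  have ET: "E\<^sup>T \<in> carrier_mat r n" using E by simp
  have "E\<^sup>T * E = R\<^sup>T * R"
  proof (rule eq_matI)
    fix i j assume "i < dim_row (R\<^sup>T * R)" "j < dim_col (R\<^sup>T * R)"
    hence ij: "i < r" "j < r" using R by auto
    have "(E\<^sup>T * E) $$ (i,j) = (\<Sum>l\<in>{0..<n}. E $$ (l,i) * E $$ (l,j))"
      unfolding mult_entry[OF ET E ij] using ij E by simp
    also have "\<dots> = (\<Sum>l\<in>{0..<r}. E $$ (l,i) * E $$ (l,j))"
      by (rule sum.mono_neutral_right, insert rn ij, auto simp: E_idx)
    also have "\<dots> = (R\<^sup>T * R) $$ (i,j)"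
      unfolding mult_entry[OF RT R ij] using ij R rn by (auto simp: E_idx intro!: sum.cong)
    finally show "(E\<^sup>T * E) $$ (i,j) = (R\<^sup>T * R) $$ (i,j)" .
  qed (insert R E, auto)
  thus ?thesis unfolding VtV using det_mult[OF RT R] det_transpose[OF R] by simp
qed

lemma esym_full: "M \<in> carrier_mat m m \<Longrightarrow> esym_mat m (M :: 'a :: idom mat) = det M"
proof -
  assume M: "M \<in> carrier_mat m m"
  have "{S. S \<subseteq> {0..<m} \<and> card S = m} = {{0..<m}}"
    using card_subset_eq[of "{0..<m}"] by auto
  moreover have "restr M {0..<m} = M" using M by (auto simp: restr_def intro!: eq_matI)
  ultimately show ?thesis unfolding esym_restr[OF M] by simp
qed

lemma part2: "coeff (det (pencil_mat A V)) r = det (V\<^sup>T * V) * det B22"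
  using part1[OF rn] esym_full[OF pencil] esym_full[OF B22] by simp

definition "Fp = four_block_mat B E E\<^sup>T (0\<^sub>m r r)"

lemma detQ: "det Qfull * det Qfull = 1"
proof -
  have "det (Qfull\<^sup>T * Qfull) = det Qfull * det Qfull"
    using det_mult[OF QT Q] det_transpose[OF Q] by simp
  thus ?thesis using QQ by simp
qed

lemma det_rot: "det (four_block_mat A V V\<^sup>T (0\<^sub>m r r)) = det Fp"
proof -
  let ?W = "four_block_mat Qfull (0\<^sub>m n r) (0\<^sub>m r n) (1\<^sub>m r) :: real mat"
  let ?F = "four_block_mat A V V\<^sup>T (0\<^sub>m r r)"
  have VT: "V\<^sup>T \<in> carrier_mat r n" using V by simp
  have W: "?W \<in> carrier_mat (n + r) (n + r)" using Q by simp
  have F: "?F \<in> carrier_mat (n + r) (n + r)" using A V by simp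
  have WT: "?W\<^sup>T = four_block_mat Qfull\<^sup>T (0\<^sub>m n r) (0\<^sub>m r n) (1\<^sub>m r)"
    by (subst transpose_four_block_mat, insert Q, auto)
  have QTA: "Qfull\<^sup>T * A \<in> carrier_mat n n" using QT A by simp
  have "?W\<^sup>T * ?F = four_block_mat (Qfull\<^sup>T * A + 0\<^sub>m n r * V\<^sup>T) (Qfull\<^sup>T * V + 0\<^sub>m n r * 0\<^sub>m r r)
      (0\<^sub>m r n * A + 1\<^sub>m r * V\<^sup>T) (0\<^sub>m r n * V + 1\<^sub>m r * 0\<^sub>m r r)"
    unfolding WT by (rule mult_four_block_mat[OF QT zero_carrier_mat zero_carrier_mat one_carrier_mat A V VT zero_carrier_mat])
  also have "\<dots> = four_block_mat (Qfull\<^sup>T * A) E V\<^sup>T (0\<^sub>m r r)"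
  proof -
    have a: "0\<^sub>m n r * V\<^sup>T = (0\<^sub>m n n :: real mat)" by (rule left_mult_zero_mat[OF VT])
    have b: "0\<^sub>m n r * 0\<^sub>m r r = (0\<^sub>m n r :: real mat)" by (intro eq_matI) auto
    have c: "0\<^sub>m r n * A = (0\<^sub>m r n :: real mat)" by (rule left_mult_zero_mat[OF A])
    have d: "1\<^sub>m r * V\<^sup>T = V\<^sup>T" by (rule left_mult_one_mat[OF VT])
    have e: "0\<^sub>m r n * V = (0\<^sub>m r r :: real mat)" by (rule left_mult_zero_mat[OF V])
    have f: "1\<^sub>m r * 0\<^sub>m r r = (0\<^sub>m r r :: real mat)" by (intro eq_matI) auto
    have g: "(0\<^sub>m r r :: real mat) + 0\<^sub>m r r = 0\<^sub>m r r" by (intro eq_matI) auto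
    show ?thesis unfolding a b c d e f g right_add_zero_mat[OF QTA] QtV right_add_zero_mat[OF E] left_add_zero_mat[OF VT] ..
  qed
  finally have 1: "?W\<^sup>T * ?F = four_block_mat (Qfull\<^sup>T * A) E V\<^sup>T (0\<^sub>m r r)" .
  have "?W\<^sup>T * ?F * ?W = four_block_mat (Qfull\<^sup>T * A * Qfull + E * 0\<^sub>m r n) (Qfull\<^sup>T * A * 0\<^sub>m n r + E * 1\<^sub>m r)
      (V\<^sup>T * Qfull + 0\<^sub>m r r * 0\<^sub>m r n) (V\<^sup>T * 0\<^sub>m n r + 0\<^sub>m r r * 1\<^sub>m r)"
    unfolding 1 by (rule mult_four_block_mat[OF QTA E VT zero_carrier_mat Q zero_carrier_mat zero_carrier_mat one_carrier_mat])
  also have "\<dots> = Fp"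
  proof -
    have QTAQ: "Qfull\<^sup>T * A * Qfull \<in> carrier_mat n n" using QTA Q by simp
    have a: "E * 0\<^sub>m r n = (0\<^sub>m n n :: real mat)" by (rule right_mult_zero_mat[OF E])
    have b: "Qfull\<^sup>T * A * 0\<^sub>m n r = (0\<^sub>m n r :: real mat)" by (rule right_mult_zero_mat[OF QTA])
    have c: "E * 1\<^sub>m r = E" by (rule right_mult_one_mat[OF E])
    have d: "0\<^sub>m r r * 0\<^sub>m r n = (0\<^sub>m r n :: real mat)" by (intro eq_matI) auto
    have e: "V\<^sup>T * 0\<^sub>m n r = (0\<^sub>m r r :: real mat)" by (rule right_mult_zero_mat[OF VT])
    have f: "0\<^sub>m r r * 1\<^sub>m r = (0\<^sub>m r r :: real mat)" by (intro eq_matI) auto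
    have g: "(0\<^sub>m r r :: real mat) + 0\<^sub>m r r = 0\<^sub>m r r" by (intro eq_matI) auto
    have ET: "E\<^sup>T \<in> carrier_mat r n" using E by simp
    show ?thesis unfolding a b c d e f g right_add_zero_mat[OF QTAQ] VtQ right_add_zero_mat[OF ET] left_add_zero_mat[OF E]
      Fp_def B_def ..
  qed
  finally have 2: "?W\<^sup>T * ?F * ?W = Fp" .
  have WT': "?W\<^sup>T \<in> carrier_mat (n + r) (n + r)" using W by simp
  have "det ?W = det Qfull * det (1\<^sub>m r :: real mat)"
    by (rule det_four_block_mat_upper_right_zero[OF Q refl zero_carrier_mat one_carrier_mat])
  hence dW: "det ?W = det Qfull" by simp
  have "det Fp = det ?W\<^sup>T * det ?F * det ?W"
    unfolding 2[symmetric] using det_mult[OF mult_carrier_mat[OF WT' F] W] det_mult[OF WT' F] by simp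
  also have "\<dots> = det ?F * (det Qfull * det Qfull)" using det_transpose[OF W] dW by simp
  finally show ?thesis using detQ by simp
qed

end

context lctx
begin

lemma Fp: "Fp \<in> carrier_mat (n + r) (n + r)" unfolding Fp_def using B E by simp

lemma Fp_idx: "i < n + r \<Longrightarrow> j < n + r \<Longrightarrow> Fp $$ (i,j) =
  (if i < n then (if j < n then B $$ (i,j) else (if i < r then R $$ (i, j - n) else 0))
   else (if j < n then (if j < r then R $$ (j, i - n) else 0) else 0))"
  unfolding Fp_def using B E by (auto simp: E_idx)

lemma sign_aux: "(-1::real) ^ (n * r) * (-1) ^ (r * (n - r)) = (-1) ^ r"
proof -
  have e: "n * r + r * (n - r) = 2 * (r * (n - r)) + r * r"
  proof -
    have "n = r + (n - r)" using rn by simp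
    hence "n * r = (r + (n - r)) * r" by simp
    thus ?thesis by (simp add: algebra_simps)
  qed
  have "(-1::real) ^ (n * r) * (-1) ^ (r * (n - r)) = (-1) ^ (n * r + r * (n - r))"
    by (simp add: power_add)
  also have "\<dots> = (-1) ^ (2 * (r * (n - r)) + r * r)" unfolding e ..
  also have "\<dots> = (-1) ^ (r * r)" by (simp add: power_add power_mult)
  also have "\<dots> = (-1) ^ r" by (simp add: minus_one_power_iff)
  finally show ?thesis .
qed

lemma det_Fp: "det Fp = (-1) ^ r * (det R * det R * det B22)"
proof -
  let ?F1 = "mat (n + r) (n + r) (\<lambda>(i,j). Fp $$ (if i < n then i + r else i - n, j))"
  have s1: "det Fp = (-1) ^ (n * r) * det ?F1" by (rule det_swap_rows[OF Fp])
  let ?T = "mat n n (\<lambda>(i,j). Fp $$ (i + r, j))"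
  let ?F21 = "mat r n (\<lambda>(i,j). Fp $$ (i, j))"
  have T: "?T \<in> carrier_mat n n" by simp
  have eq1: "?F1 = four_block_mat ?T (0\<^sub>m n r) ?F21 R"
  proof (rule eq_matI)
    fix i j assume "i < dim_row (four_block_mat ?T (0\<^sub>m n r) ?F21 R)" "j < dim_col (four_block_mat ?T (0\<^sub>m n r) ?F21 R)"
    hence i: "i < n + r" and j: "j < n + r" using R by auto
    have rhs: "four_block_mat ?T (0\<^sub>m n r) ?F21 R $$ (i,j) = (if i < n then if j < n then Fp $$ (i + r, j) else 0
       else if j < n then Fp $$ (i - n, j) else R $$ (i - n, j - n))"
      using i j R by auto
    show "?F1 $$ (i,j) = four_block_mat ?T (0\<^sub>m n r) ?F21 R $$ (i,j)"
      unfolding rhs using i j rn by (auto simp: Fp_idx)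
  qed (insert R, auto)
  have s2: "det ?F1 = det ?T * det R"
    unfolding eq1 by (rule det_four_block_mat_upper_right_zero[OF T refl _ R], simp)
  have nr: "r + (n - r) = n" using rn by simp
  have T': "?T \<in> carrier_mat (r + (n - r)) (r + (n - r))" unfolding nr by simp
  let ?T1 = "mat n n (\<lambda>(i,j). ?T $$ (if i < r then i + (n - r) else i - r, j))"
  have s3: "det ?T = (-1) ^ (r * (n - r)) * det ?T1"
    using det_swap_rows[OF T'] unfolding nr .
  let ?B21 = "mat (n - r) r (\<lambda>(i,j). B $$ (r + i, j))"
  have RT: "R\<^sup>T \<in> carrier_mat r r" using R by simp
  have eq2: "?T1 = four_block_mat R\<^sup>T (0\<^sub>m r (n - r)) ?B21 B22"
  proof (rule eq_matI)
    fix i j assume "i < dim_row (four_block_mat R\<^sup>T (0\<^sub>m r (n - r)) ?B21 B22)" "j < dim_col (four_block_mat R\<^sup>T (0\<^sub>m r (n - r)) ?B21 B22)"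
    hence i: "i < n" and j: "j < n" using R B22 rn by auto
    have rhs: "four_block_mat R\<^sup>T (0\<^sub>m r (n - r)) ?B21 B22 $$ (i,j) = (if i < r then if j < r then R $$ (j, i) else 0
       else if j < r then B $$ (i, j) else B $$ (i, j))"
      using i j R B22 rn by (auto simp: B22_def)
    have lhs: "?T1 $$ (i,j) = (if i < r then Fp $$ (i + n, j) else Fp $$ (i, j))"
      using i j rn by auto
    show "?T1 $$ (i,j) = four_block_mat R\<^sup>T (0\<^sub>m r (n - r)) ?B21 B22 $$ (i,j)"
      unfolding lhs rhs using i j rn by (auto simp: Fp_idx)
  qed (insert R B22 rn, auto)
  have s4: "det ?T1 = det R\<^sup>T * det B22"
    unfolding eq2 by (rule det_four_block_mat_upper_right_zero[OF RT refl _ B22], simp)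
  have "det Fp = ((-1) ^ (n * r) * (-1) ^ (r * (n - r))) * (det R * det R * det B22)"
    unfolding s1 s2 s3 s4 det_transpose[OF R] by (simp add: ac_simps)
  thus ?thesis unfolding sign_aux .
qed

lemma part3: "det (V\<^sup>T * V) * det B22 = (-1) ^ r * det (four_block_mat A V V\<^sup>T (0\<^sub>m r r))"
  unfolding det_rot det_Fp detVtV by simp

end

theorem lemma3p10:
  fixes A V Qfull R :: "real mat" and n r :: nat
  assumes "A \<in> carrier_mat n n" and "V \<in> carrier_mat n r" and "r \<le> n"
    and "Qfull \<in> carrier_mat n n" and "Qfull\<^sup>T * Qfull = 1\<^sub>m n"
    and "R \<in> carrier_mat r r" and "upper_triangular R"
    and "V = Qfull * (R @\<^sub>r 0\<^sub>m (n - r) r)"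
  defines "Qperp \<equiv> mat n (n - r) (\<lambda>(i, j). Qfull $$ (i, r + j))"
  shows "(\<forall>k\<ge>r. degree (esym_mat k (pencil_mat A V)) \<le> r \<and>
            coeff (esym_mat k (pencil_mat A V)) r
              = det (V\<^sup>T * V) * esym_mat (k - r) (Qperp\<^sup>T * A * Qperp))
       \<and> coeff (det (pencil_mat A V)) r = det (V\<^sup>T * V) * det (Qperp\<^sup>T * A * Qperp)
       \<and> det (V\<^sup>T * V) * det (Qperp\<^sup>T * A * Qperp)
           = (-1) ^ r * det (four_block_mat A V (V\<^sup>T) (0\<^sub>m r r))"
proof -
  interpret lctx A V Qfull R n r
    by (unfold_locales, insert assms(1-6,8), auto)
  have QP: "Qperp\<^sup>T * A * Qperp = B22" unfolding Qperp_def by (rule B22_Qperp)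
  show ?thesis unfolding QP using part1 part2 part3 by auto
qed

end
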